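(* Let $\vec G$ be an oriented graph whose underlying graph $G$ has maximum average degree $\mathrm{mad}(G)<8/3$. Then the push graph $[\vec G]$ admits a homomorphism to the oriented graph $\vec P_3^+$; that is, some presentation of $[\vec G]$ admits a homomorphism to $\vec P_3^+$.
   Context: The maximum average degree of an undirected graph $G$ is $\mathrm{mad}(G)=\max\{2|E(H)|/|V(H)| : H \text{ a subgraph of } G \text{ with } V(H)\neq\emptyset\}$. $\vec P_3^+$ is the oriented graph on vertices $\{a,b,c,d\}$ with arcs $ac,\ cb,\ ba$ (a directed $3$-cycle) and $da,\ db,\ dc$. An oriented graph is a directed graph with no loops and no pair of opposite arcs. A homomorphism of oriented graphs $\vec G\to\vec H$ is a vertex map sending every arc $uv$ to an arc $\varphi(u)\varphi(v)$. To push a vertex means to reverse all arcs incident with it; the push graph $[\vec G]$ is the set of oriented graphs obtainable from $\vec G$ by pushing some set of vertices (its presentations). *)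

theory Defs
  imports Complex_Main
begin

definition oriented_graph :: "'a set \<Rightarrow> ('a \<times> 'a) set \<Rightarrow> bool" where
  "oriented_graph V A \<longleftrightarrow> finite V \<and> A \<subseteq> V \<times> V \<and>
     (\<forall>v. (v, v) \<notin> A) \<and> (\<forall>u v. (u, v) \<in> A \<longrightarrow> (v, u) \<notin> A)"

definition underlying_edges :: "('a \<times> 'a) set \<Rightarrow> 'a set set" where
  "underlying_edges A = {{u, v} | u v. (u, v) \<in> A}"

definition mad :: "'a set \<Rightarrow> ('a \<times> 'a) set \<Rightarrow> real" where
  "mad V A = Max {2 * real (card E') / real (card V') | V' E'.
      V' \<subseteq> V \<and> V' \<noteq> {} \<and> E' \<subseteq> underlying_edges A \<and> (\<forall>e\<in>E'. e \<subseteq> V')}"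

text \<open>Pushing the vertex set X: every arc with exactly one end in X is reversed
  (pushing each vertex of X once).\<close>
definition push :: "'a set \<Rightarrow> ('a \<times> 'a) set \<Rightarrow> ('a \<times> 'a) set" where
  "push X A = {(u, v). ((u, v) \<in> A \<and> (u \<in> X \<longleftrightarrow> v \<in> X)) \<or>
                        ((v, u) \<in> A \<and> \<not> (u \<in> X \<longleftrightarrow> v \<in> X))}"

datatype P3 = Pa | Pb | Pc | Pd

definition P3plus_arcs :: "(P3 \<times> P3) set" where
  "P3plus_arcs = {(Pa, Pc), (Pc, Pb), (Pb, Pa), (Pd, Pa), (Pd, Pb), (Pd, Pc)}"

definition hom_to_P3plus :: "'a set \<Rightarrow> ('a \<times> 'a) set \<Rightarrow> ('a \<Rightarrow> P3) \<Rightarrow> bool" where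
  "hom_to_P3plus V A \<phi> \<longleftrightarrow> (\<forall>(u, v) \<in> A. (\<phi> u, \<phi> v) \<in> P3plus_arcs)"

end

theory Submission imports Defs begin
definition T :: "P3 \<Rightarrow> P3 \<Rightarrow> bool" where "T x y \<longleftrightarrow> (x, y) \<in> P3plus_arcs"
definition R :: "P3 \<Rightarrow> P3 \<Rightarrow> bool \<Rightarrow> bool" where "R x y s = (if s then T x y else T y x)"
definition C :: "bool \<Rightarrow> P3 \<Rightarrow> bool \<Rightarrow> P3 \<Rightarrow> bool \<Rightarrow> bool" where
  "C d x bx y byy = (if d then R x y (bx = byy) else R y x (bx = byy))"
lemma P3_ex: "(\<exists>c. P c) = (P Pa \<or> P Pb \<or> P Pc \<or> P Pd)" by (metis P3.exhaust)
lemmas evs = T_def R_def C_def P3plus_arcs_def P3_ex ex_bool_eq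
lemma L1: "\<exists>c b. C d c b x bx" by (cases x; cases d; cases bx; simp add: evs)
lemma LB: "c \<noteq> y \<Longrightarrow> \<exists>b. C d c b y byy" by (cases c; cases y; cases d; cases byy; simp add: evs)
lemma LA: "x \<noteq> z \<Longrightarrow> \<exists>c b. C d1 c b x bx \<and> C d2 c b z bz"
  by (cases x; cases z; cases d1; cases d2; cases bx; cases bz; simp add: evs)
lemma L3: "\<exists>c::P3. c \<noteq> x \<and> c \<noteq> y \<and> c \<noteq> z" by (cases x; cases y; cases z; simp add: P3_ex)

definition adj :: "('a \<times> 'a) set \<Rightarrow> 'a \<Rightarrow> 'a \<Rightarrow> bool" where
  "adj A u v \<longleftrightarrow> (u, v) \<in> A \<or> (v, u) \<in> A"
definition N :: "('a \<times> 'a) set \<Rightarrow> 'a set \<Rightarrow> 'a \<Rightarrow> 'a set" where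
  "N A W v = {u \<in> W. adj A u v}"
definition deg :: "('a \<times> 'a) set \<Rightarrow> 'a set \<Rightarrow> 'a \<Rightarrow> nat" where
  "deg A W v = card (N A W v)"
definition good :: "('a \<times> 'a) set \<Rightarrow> 'a set \<Rightarrow> 'a set \<Rightarrow> ('a \<Rightarrow> P3) \<Rightarrow> bool" where
  "good A W X \<phi> \<longleftrightarrow> (\<forall>u v. u \<in> W \<longrightarrow> v \<in> W \<longrightarrow> (u, v) \<in> A \<longrightarrow> R (\<phi> u) (\<phi> v) (u \<in> X \<longleftrightarrow> v \<in> X))"
definition Ok :: "('a \<times> 'a) set \<Rightarrow> ('a \<Rightarrow> P3) \<Rightarrow> 'a set \<Rightarrow> 'a \<Rightarrow> 'a \<Rightarrow> bool" where
  "Ok A \<phi> X p q = C ((p, q) \<in> A) (\<phi> p) (p \<in> X) (\<phi> q) (q \<in> X)"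

lemma Ok_sym:
  assumes og: "oriented_graph V A" and "adj A p q" and "Ok A \<phi> X p q"
  shows "Ok A \<phi> X q p"
proof -
  have "(p, q) \<in> A \<and> (q, p) \<notin> A \<or> (q, p) \<in> A \<and> (p, q) \<notin> A"
    using assms(2) og unfolding adj_def oriented_graph_def by blast
  then show ?thesis using assms(3)
    by (cases "p \<in> X"; cases "q \<in> X") (auto simp: Ok_def C_def)
qed

lemma good_extend:
  assumes og: "oriented_graph V A" and "S \<subseteq> W" and g: "good A (W - S) X \<phi>"
    and eq: "\<forall>u\<in>W - S. \<phi>' u = \<phi> u \<and> (u \<in> X' \<longleftrightarrow> u \<in> X)"
    and ok: "\<forall>s\<in>S. \<forall>t\<in>N A W s. Ok A \<phi>' X' s t"
  shows "good A W X' \<phi>'"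
  unfolding good_def
proof (intro allI impI)
  fix u v assume u: "u \<in> W" and v: "v \<in> W" and uv: "(u, v) \<in> A"
  have vu: "(v, u) \<notin> A" using og uv unfolding oriented_graph_def by blast
  show "R (\<phi>' u) (\<phi>' v) (u \<in> X' \<longleftrightarrow> v \<in> X')"
  proof (cases "u \<in> S")
    case True
    then have "v \<in> N A W u" using v uv by (auto simp: N_def adj_def)
    then have "Ok A \<phi>' X' u v" using ok True by blast
    then show ?thesis using uv by (simp add: Ok_def C_def)
  next
    case uS: False
    show ?thesis
    proof (cases "v \<in> S")
      case True
      then have "u \<in> N A W v" using u uv by (auto simp: N_def adj_def)
      then have "Ok A \<phi>' X' v u" using ok True by blast
      then show ?thesis using vu
        by (cases "u \<in> X'"; cases "v \<in> X'") (auto simp: Ok_def C_def)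
    next
      case False
      then show ?thesis using g uS u v uv eq by (auto simp: good_def)
    qed
  qed
qed

lemma card2_other:
  assumes "card S = 2" "a \<in> S" shows "\<exists>b. S = {a, b} \<and> b \<noteq> a"
  using assms by (auto simp: card_2_iff)

lemma card3_other:
  assumes "card S = 3" "a \<in> S" "b \<in> S" "a \<noteq> b" shows "\<exists>c. S = {a, b, c} \<and> c \<noteq> a \<and> c \<noteq> b"
  using assms by (auto simp: card_3_iff)


definition gw :: "('a \<times> 'a) set \<Rightarrow> 'a set \<Rightarrow> 'a \<Rightarrow> 'a \<Rightarrow> int" where
  "gw A W v u = 3 + (if deg A W v = 2 \<and> 3 \<le> deg A W u then 1 else 0)
                   - (if 3 \<le> deg A W v \<and> deg A W u = 2 then 1 else 0)"

lemma gw_sym: "gw A W v u + gw A W u v = 6"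
  by (auto simp: gw_def)

lemma counting:
  assumes og: "oriented_graph V A" and WV: "W \<subseteq> V"
    and d2: "\<forall>v\<in>W. 2 \<le> deg A W v"
    and n22: "\<forall>u\<in>W. \<forall>v\<in>W. adj A u v \<longrightarrow> deg A W u = 2 \<longrightarrow> deg A W v = 2 \<longrightarrow> False"
    and n3: "\<forall>v\<in>W. deg A W v = 3 \<longrightarrow> (\<forall>a\<in>N A W v. \<forall>b\<in>N A W v. a \<noteq> b \<longrightarrow> deg A W a = 2 \<longrightarrow> deg A W b = 2 \<longrightarrow> False)"
  shows "8 * card W \<le> 6 * card (A \<inter> W \<times> W)"
proof -
  have fW: "finite W" using og WV finite_subset unfolding oriented_graph_def by blast
  define Arc where "Arc = A \<inter> W \<times> W"
  have fArc: "finite Arc" using fW unfolding Arc_def by (simp add: finite_Int)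
  define outs where "outs v = {u \<in> W. (v, u) \<in> A}" for v
  define ins where "ins v = {u \<in> W. (u, v) \<in> A}" for v
  let ?g = "gw A W"
  have Nsplit: "N A W v = outs v \<union> ins v" for v
    by (auto simp: N_def adj_def outs_def ins_def)
  have disj: "outs v \<inter> ins v = {}" for v
    using og unfolding oriented_graph_def outs_def ins_def by blast
  have fo: "finite (outs v)" "finite (ins v)" for v using fW by (auto simp: outs_def ins_def)
  have s1: "(\<Sum>v\<in>W. \<Sum>u\<in>outs v. ?g v u) = (\<Sum>(x, y)\<in>Arc. ?g x y)"
  proof -
    have "(\<Sum>v\<in>W. \<Sum>u\<in>outs v. ?g v u) = (\<Sum>(x, y)\<in>Sigma W outs. ?g x y)"
      using fW fo by (simp add: sum.Sigma)
    moreover have "Sigma W outs = Arc" by (auto simp: Arc_def outs_def)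
    ultimately show ?thesis by simp
  qed
  have s2: "(\<Sum>v\<in>W. \<Sum>u\<in>ins v. ?g v u) = (\<Sum>(x, y)\<in>Arc. ?g y x)"
  proof -
    have "(\<Sum>v\<in>W. \<Sum>u\<in>ins v. ?g v u) = (\<Sum>(x, y)\<in>Sigma W ins. ?g x y)"
      using fW fo by (simp add: sum.Sigma)
    moreover have "Sigma W ins = prod.swap ` Arc" by (auto simp: Arc_def ins_def)
    moreover have "(\<Sum>(x, y)\<in>prod.swap ` Arc. ?g x y) = (\<Sum>(x, y)\<in>Arc. ?g y x)"
      by (subst sum.reindex) (auto simp: case_prod_beta)
    ultimately show ?thesis by simp
  qed
  have tot: "(\<Sum>v\<in>W. \<Sum>u\<in>N A W v. ?g v u) = 6 * int (card Arc)"
  proof -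
    have "(\<Sum>v\<in>W. \<Sum>u\<in>N A W v. ?g v u) = (\<Sum>v\<in>W. (\<Sum>u\<in>outs v. ?g v u) + (\<Sum>u\<in>ins v. ?g v u))"
      using fo disj by (simp add: Nsplit sum.union_disjoint)
    also have "\<dots> = (\<Sum>(x, y)\<in>Arc. ?g x y) + (\<Sum>(x, y)\<in>Arc. ?g y x)"
      by (simp add: sum.distrib s1 s2)
    also have "\<dots> = (\<Sum>(x, y)\<in>Arc. ?g x y + ?g y x)"
      by (simp add: sum.distrib case_prod_beta)
    also have "\<dots> = (\<Sum>p\<in>Arc. 6)" by (simp add: gw_sym case_prod_beta)
    finally show ?thesis by simp
  qed
  have loc: "8 \<le> (\<Sum>u\<in>N A W v. ?g v u)" if v: "v \<in> W" for v
  proof -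
    have fN: "finite (N A W v)" using fW by (simp add: N_def)
    have Nsub: "N A W v \<subseteq> W" by (auto simp: N_def)
    have degs: "\<And>u. u \<in> N A W v \<Longrightarrow> 2 \<le> deg A W u" using d2 Nsub by blast
    have adjv: "\<And>u. u \<in> N A W v \<Longrightarrow> adj A u v" by (auto simp: N_def)
    consider "deg A W v = 2" | "deg A W v = 3" | "4 \<le> deg A W v" using d2 v by force
    then show ?thesis
    proof cases
      case 1
      then obtain a b where ab: "N A W v = {a, b}" "a \<noteq> b" by (auto simp: deg_def card_2_iff)
      have "\<And>u. u \<in> N A W v \<Longrightarrow> 3 \<le> deg A W u"
      proof -
        fix u assume u: "u \<in> N A W v"
        have "deg A W u \<noteq> 2" using n22 u Nsub v 1 adjv[OF u] by blast
        with degs[OF u] show "3 \<le> deg A W u" by linarith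
      qed
      then have "\<And>u. u \<in> N A W v \<Longrightarrow> ?g v u = 4" using 1 by (simp add: gw_def)
      then show ?thesis using ab by simp
    next
      case 2
      then obtain a b c where abc: "N A W v = {a, b, c}" "a \<noteq> b" "b \<noteq> c" "a \<noteq> c"
        by (auto simp: deg_def card_3_iff)
      have ge: "\<And>u. u \<in> N A W v \<Longrightarrow> ?g v u = (if deg A W u = 2 then 2 else 3)"
        using 2 by (simp add: gw_def)
      have "\<And>x y. x \<in> N A W v \<Longrightarrow> y \<in> N A W v \<Longrightarrow> x \<noteq> y \<Longrightarrow> deg A W x = 2 \<Longrightarrow> deg A W y = 2 \<Longrightarrow> False"
        using n3 v 2 by blast
      then show ?thesis using abc ge[of a] ge[of b] ge[of c] by (auto split: if_splits)
    next
      case 3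
      have "\<And>u. u \<in> N A W v \<Longrightarrow> 2 \<le> ?g v u" by (simp add: gw_def)
      then have "of_nat (card (N A W v)) * 2 \<le> (\<Sum>u\<in>N A W v. ?g v u)"
        by (rule sum_bounded_below)
      then show ?thesis using 3 by (simp add: deg_def)
    qed
  qed
  have "of_nat (card W) * 8 \<le> (\<Sum>v\<in>W. \<Sum>u\<in>N A W v. ?g v u)"
    using loc by (rule sum_bounded_below)
  then have "int (card W) * 8 \<le> 6 * int (card Arc)" using tot by simp
  then show ?thesis unfolding Arc_def by linarith
qed


lemma density:
  assumes og: "oriented_graph V A" and m: "mad V A < 8 / 3" and WV: "W \<subseteq> V" and ne: "W \<noteq> {}"
  shows "6 * card (A \<inter> W \<times> W) < 8 * card W"
proof -
  have fV: "finite V" and AV: "A \<subseteq> V \<times> V" using og by (auto simp: oriented_graph_def)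
  have fA: "finite A" using fV AV finite_subset by blast
  have fW: "finite W" using fV WV finite_subset by blast
  define f where "f = (\<lambda>(u::'a, v::'a). {u, v})"
  define E' where "E' = f ` (A \<inter> W \<times> W)"
  have inj: "inj_on f (A \<inter> W \<times> W)"
  proof (rule inj_onI)
    fix p q assume p: "p \<in> A \<inter> W \<times> W" and q: "q \<in> A \<inter> W \<times> W" and e: "f p = f q"
    obtain a b where [simp]: "p = (a, b)" by fastforce
    obtain c d where [simp]: "q = (c, d)" by fastforce
    have "(a = c \<and> b = d) \<or> (a = d \<and> b = c)" using e by (auto simp: f_def doubleton_eq_iff)
    moreover have "(a, b) \<in> A" "(c, d) \<in> A" using p q by auto
    moreover have "\<forall>u v. (u, v) \<in> A \<longrightarrow> (v, u) \<notin> A" using og unfolding oriented_graph_def by blast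
    ultimately show "p = q" by auto
  qed
  have cE: "card E' = card (A \<inter> W \<times> W)" unfolding E'_def using inj by (rule card_image)
  define S where "S = {2 * real (card E'') / real (card V') | V' E''.
      V' \<subseteq> V \<and> V' \<noteq> {} \<and> E'' \<subseteq> underlying_edges A \<and> (\<forall>e\<in>E''. e \<subseteq> V')}"
  have ue: "underlying_edges A \<subseteq> f ` A" by (auto simp: underlying_edges_def f_def)
  have fue: "finite (underlying_edges A)" using finite_subset[OF ue] fA by simp
  have "S \<subseteq> (\<lambda>(V', E''). 2 * real (card E'') / real (card V')) ` (Pow V \<times> Pow (underlying_edges A))"
  proof
    fix x assume "x \<in> S"
    then obtain V' E'' where x: "x = 2 * real (card E'') / real (card V')" and c: "V' \<subseteq> V" "E'' \<subseteq> underlying_edges A"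
      unfolding S_def by blast
    show "x \<in> (\<lambda>(V', E''). 2 * real (card E'') / real (card V')) ` (Pow V \<times> Pow (underlying_edges A))"
      by (rule image_eqI[where x="(V', E'')"]) (use x c in auto)
  qed
  then have fS: "finite S" by (rule finite_subset) (use fV fue in simp)
  have E1: "E' \<subseteq> underlying_edges A" by (auto simp: E'_def f_def underlying_edges_def)
  have E2: "\<forall>e\<in>E'. e \<subseteq> W" by (auto simp: E'_def f_def)
  have mem: "2 * real (card E') / real (card W) \<in> S"
    unfolding S_def using WV ne E1 E2 by (intro CollectI exI[where x=W] exI[where x=E']) simp
  have "2 * real (card E') / real (card W) \<le> mad V A"
    unfolding mad_def using Max_ge[OF fS mem] by (simp add: S_def)
  with m have lt: "2 * real (card E') / real (card W) < 8 / 3" by linarith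
  have "card W > 0" using fW ne by (simp add: card_gt_0_iff)
  then have "2 * real (card E') < 8 / 3 * real (card W)" using lt by (simp add: divide_less_eq)
  then have "real (6 * card E') < real (8 * card W)" by simp
  then show ?thesis using cE by linarith
qed


lemma main_ind:
  assumes og: "oriented_graph V A" and m: "mad V A < 8 / 3"
  shows "W \<subseteq> V \<Longrightarrow> \<exists>X \<phi>. good A W X \<phi>"
proof (induction "card W" arbitrary: W rule: less_induct)
  case less
  have fV: "finite V" using og by (simp add: oriented_graph_def)
  have fW: "finite W" using less.prems fV finite_subset by blast
  have noloop: "\<And>u. \<not> adj A u u" using og by (simp add: oriented_graph_def adj_def)
  have IH: "\<And>S. S \<subseteq> W \<Longrightarrow> S \<noteq> {} \<Longrightarrow> \<exists>X \<phi>. good A (W - S) X \<phi>"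
  proof -
    fix S assume S: "S \<subseteq> W" "S \<noteq> {}"
    have "card (W - S) < card W" using S fW
      by (metis Diff_subset psubsetI Diff_eq_empty_iff Diff_Diff_Int inf.absorb2 psubset_card_mono)
    then show "\<exists>X \<phi>. good A (W - S) X \<phi>" using less.hyps less.prems by blast
  qed
  have Nsub: "\<And>v. N A W v \<subseteq> W" by (auto simp: N_def)
  have Nadj: "\<And>u v. u \<in> N A W v \<Longrightarrow> adj A u v" by (auto simp: N_def)
  have adjsym: "\<And>u v. adj A u v \<Longrightarrow> adj A v u" by (auto simp: adj_def)
  have Nsym: "\<And>u v. u \<in> N A W v \<Longrightarrow> v \<in> W \<Longrightarrow> v \<in> N A W u" by (auto simp: N_def adj_def)
  show ?case
  proof (cases "W = {}")
    case True
    then show ?thesis unfolding good_def by blast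
  next
    case ne: False
    have dens: "6 * card (A \<inter> W \<times> W) < 8 * card W" using density[OF og m less.prems ne] .
    consider (a) "\<exists>v\<in>W. deg A W v \<le> 1"
      | (b) "\<not> (\<exists>v\<in>W. deg A W v \<le> 1)" "\<exists>u\<in>W. \<exists>v\<in>W. adj A u v \<and> deg A W u = 2 \<and> deg A W v = 2"
      | (c) "\<not> (\<exists>v\<in>W. deg A W v \<le> 1)" "\<not> (\<exists>u\<in>W. \<exists>v\<in>W. adj A u v \<and> deg A W u = 2 \<and> deg A W v = 2)"
            "\<exists>v\<in>W. deg A W v = 3 \<and> (\<exists>a\<in>N A W v. \<exists>b\<in>N A W v. a \<noteq> b \<and> deg A W a = 2 \<and> deg A W b = 2)"
    proof -
      have "(\<exists>v\<in>W. deg A W v \<le> 1) \<or> (\<exists>u\<in>W. \<exists>v\<in>W. adj A u v \<and> deg A W u = 2 \<and> deg A W v = 2)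
         \<or> (\<exists>v\<in>W. deg A W v = 3 \<and> (\<exists>a\<in>N A W v. \<exists>b\<in>N A W v. a \<noteq> b \<and> deg A W a = 2 \<and> deg A W b = 2))"
      proof (rule ccontr)
        assume H: "\<not> ?thesis"
        have "8 * card W \<le> 6 * card (A \<inter> W \<times> W)"
        proof (rule counting[OF og less.prems])
          show "\<forall>v\<in>W. 2 \<le> deg A W v" using H by force
          show "\<forall>u\<in>W. \<forall>v\<in>W. adj A u v \<longrightarrow> deg A W u = 2 \<longrightarrow> deg A W v = 2 \<longrightarrow> False" using H by blast
          show "\<forall>v\<in>W. deg A W v = 3 \<longrightarrow> (\<forall>a\<in>N A W v. \<forall>b\<in>N A W v. a \<noteq> b \<longrightarrow> deg A W a = 2 \<longrightarrow> deg A W b = 2 \<longrightarrow> False)"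
            using H by blast
        qed
        with dens show False by linarith
      qed
      then show ?thesis using that by blast
    qed
    then show ?thesis
    proof cases
      case a
      then obtain v where v: "v \<in> W" "deg A W v \<le> 1" by blast
      obtain X \<phi> where g: "good A (W - {v}) X \<phi>" using IH[of "{v}"] v by blast
      have fN: "finite (N A W v)" using fW by (simp add: N_def)
      have "\<exists>c b. \<forall>t\<in>N A W v. C ((v, t) \<in> A) c b (\<phi> t) (t \<in> X)"
      proof (cases "N A W v = {}")
        case True then show ?thesis by simp
      next
        case False
        then obtain u where u: "u \<in> N A W v" by blast
        have "N A W v = {u}" using v(2) fN u unfolding deg_def by (metis card_le_Suc0_iff_eq One_nat_def singletonI subsetI subset_antisym singletonD)
        then show ?thesis using L1[of "(v, u) \<in> A" "\<phi> u" "u \<in> X"] by auto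
      qed
      then obtain c b where cb: "\<forall>t\<in>N A W v. C ((v, t) \<in> A) c b (\<phi> t) (t \<in> X)" by blast
      define \<phi>' where "\<phi>' = \<phi>(v := c)"
      define X' where "X' = (X - {v}) \<union> {x. x = v \<and> b}"
      have "good A W X' \<phi>'"
      proof (rule good_extend[OF og _ g])
        show "{v} \<subseteq> W" using v by simp
        show "\<forall>u\<in>W - {v}. \<phi>' u = \<phi> u \<and> (u \<in> X') = (u \<in> X)" by (auto simp: \<phi>'_def X'_def)
        show "\<forall>s\<in>{v}. \<forall>t\<in>N A W s. Ok A \<phi>' X' s t"
        proof (intro ballI)
          fix s t assume s: "s \<in> {v}" and t: "t \<in> N A W s"
          have "t \<noteq> v" using t s noloop Nadj by blast
          then show "Ok A \<phi>' X' s t" using s t cb by (auto simp: Ok_def \<phi>'_def X'_def)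
        qed
      qed
      then show ?thesis by blast
    next
      case b
      then obtain v1 v2 where v12: "v1 \<in> W" "v2 \<in> W" "adj A v1 v2" "deg A W v1 = 2" "deg A W v2 = 2" by blast
      have "v2 \<in> N A W v1" using v12 by (auto simp: N_def adj_def)
      then obtain p where p: "N A W v1 = {v2, p}" "p \<noteq> v2" using card2_other v12 by (metis deg_def)
      have "v1 \<in> N A W v2" using v12 by (auto simp: N_def adj_def)
      then obtain q where q: "N A W v2 = {v1, q}" "q \<noteq> v1" using card2_other v12 by (metis deg_def)
      have pv1: "p \<noteq> v1" using p noloop Nadj by (metis insertCI)
      have qv2: "q \<noteq> v2" using q noloop Nadj by (metis insertCI)
      have pW: "p \<in> W" and qW: "q \<in> W" using p q Nsub by blast+
      obtain X \<phi> where g: "good A (W - {v1, v2}) X \<phi>" using IH[of "{v1, v2}"] v12 by blast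
      obtain c2 where c2: "c2 \<noteq> \<phi> p" "c2 \<noteq> \<phi> q" using L3[of "\<phi> p" "\<phi> q" "\<phi> q"] by blast
      obtain b2 where b2: "C ((v2, q) \<in> A) c2 b2 (\<phi> q) (q \<in> X)" using LB c2(2) by blast
      obtain c1 b1 where c1: "C ((v1, p) \<in> A) c1 b1 (\<phi> p) (p \<in> X)" "C ((v1, v2) \<in> A) c1 b1 c2 b2"
        using LA[of "\<phi> p" c2] c2(1) by metis
      have v1v2: "v1 \<noteq> v2" using v12 noloop by blast
      define \<phi>' where "\<phi>' = \<phi>(v1 := c1, v2 := c2)"
      define X' where "X' = (X - {v1, v2}) \<union> {x. (x = v1 \<and> b1) \<or> (x = v2 \<and> b2)}"
      have o1: "Ok A \<phi>' X' v1 p" "Ok A \<phi>' X' v1 v2" "Ok A \<phi>' X' v2 q"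
        using c1 b2 pv1 p qv2 q v1v2 by (auto simp: Ok_def \<phi>'_def X'_def)
      have o2: "Ok A \<phi>' X' v2 v1" using Ok_sym[OF og v12(3) o1(2)] .
      have "good A W X' \<phi>'"
      proof (rule good_extend[OF og _ g])
        show "{v1, v2} \<subseteq> W" using v12 by simp
        show "\<forall>u\<in>W - {v1, v2}. \<phi>' u = \<phi> u \<and> (u \<in> X') = (u \<in> X)" by (auto simp: \<phi>'_def X'_def)
        show "\<forall>s\<in>{v1, v2}. \<forall>t\<in>N A W s. Ok A \<phi>' X' s t" using o1 o2 p q by auto
      qed
      then show ?thesis by blast
    next
      case c
      then obtain v a b where v: "v \<in> W" "deg A W v = 3" and ab: "a \<in> N A W v" "b \<in> N A W v" "a \<noteq> b"
        "deg A W a = 2" "deg A W b = 2" by blast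
      obtain w where w: "N A W v = {a, b, w}" "w \<noteq> a" "w \<noteq> b"
        using card3_other[of "N A W v" a b] v ab by (metis deg_def)
      have aW: "a \<in> W" and bW: "b \<in> W" and wW: "w \<in> W" using ab w Nsub by blast+
      have va: "v \<in> N A W a" using Nsym ab v by blast
      have vb: "v \<in> N A W b" using Nsym ab v by blast
      obtain u1 where u1: "N A W a = {v, u1}" "u1 \<noteq> v" using card2_other va ab by (metis deg_def)
      obtain u2 where u2: "N A W b = {v, u2}" "u2 \<noteq> v" using card2_other vb ab by (metis deg_def)
      have u1W: "u1 \<in> W" and u2W: "u2 \<in> W" using u1 u2 Nsub by blast+
      have u1a: "u1 \<noteq> a" using u1 noloop Nadj by (metis insertCI)
      have u2b: "u2 \<noteq> b" using u2 noloop Nadj by (metis insertCI)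
      have wv: "w \<noteq> v" using w noloop Nadj by (metis insertCI)
      have av: "a \<noteq> v" using ab noloop Nadj by metis
      have bv: "b \<noteq> v" using ab noloop Nadj by metis
      have u1b: "u1 \<noteq> b"
      proof
        assume "u1 = b"
        then have "adj A a b" using u1 Nadj adjsym by (metis insertCI)
        then show False using c(2) aW bW ab by blast
      qed
      have u2a: "u2 \<noteq> a"
      proof
        assume "u2 = a"
        then have "adj A b a" using u2 Nadj adjsym by (metis insertCI)
        then show False using c(2) aW bW ab by blast
      qed
      obtain X \<phi> where g: "good A (W - {v, a, b}) X \<phi>" using IH[of "{v, a, b}"] v aW bW by blast
      obtain cv where cv: "cv \<noteq> \<phi> w" "cv \<noteq> \<phi> u1" "cv \<noteq> \<phi> u2" using L3 by blast
      obtain bv where bvv: "C ((v, w) \<in> A) cv bv (\<phi> w) (w \<in> X)" using LB cv(1) by blast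
      obtain ca ba where ca: "C ((a, u1) \<in> A) ca ba (\<phi> u1) (u1 \<in> X)" "C ((a, v) \<in> A) ca ba cv bv"
        using LA[of "\<phi> u1" cv] cv(2) by metis
      obtain cb bb where cb: "C ((b, u2) \<in> A) cb bb (\<phi> u2) (u2 \<in> X)" "C ((b, v) \<in> A) cb bb cv bv"
        using LA[of "\<phi> u2" cv] cv(3) by metis
      define \<phi>' where "\<phi>' = \<phi>(v := cv, a := ca, b := cb)"
      define X' where "X' = (X - {v, a, b}) \<union> {x. (x = v \<and> bv) \<or> (x = a \<and> ba) \<or> (x = b \<and> bb)}"
      have o1: "Ok A \<phi>' X' v w" "Ok A \<phi>' X' a u1" "Ok A \<phi>' X' a v" "Ok A \<phi>' X' b u2" "Ok A \<phi>' X' b v"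
        using bvv ca cb u1a u1b u2a u2b wv av bv ab w u1 u2 by (auto simp: Ok_def \<phi>'_def X'_def)
      have o2: "Ok A \<phi>' X' v a" "Ok A \<phi>' X' v b"
        using Ok_sym[OF og _ o1(3)] Ok_sym[OF og _ o1(5)] ab Nadj by auto
      have "good A W X' \<phi>'"
      proof (rule good_extend[OF og _ g])
        show "{v, a, b} \<subseteq> W" using v aW bW by simp
        show "\<forall>u\<in>W - {v, a, b}. \<phi>' u = \<phi> u \<and> (u \<in> X') = (u \<in> X)" by (auto simp: \<phi>'_def X'_def)
        show "\<forall>s\<in>{v, a, b}. \<forall>t\<in>N A W s. Ok A \<phi>' X' s t" using o1 o2 w u1 u2 by auto
      qed
      then show ?thesis by blast
    qed
  qed
qed

theorem mainTheorem12:
  fixes V :: "'a set" and A :: "('a \<times> 'a) set"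
  assumes "oriented_graph V A"
    and "mad V A < 8 / 3"
  shows "\<exists>X \<subseteq> V. \<exists>\<phi>. hom_to_P3plus V (push X A) \<phi>"
proof -
  obtain X \<phi> where g: "good A V X \<phi>" using main_ind[OF assms] by blast
  have AV: "A \<subseteq> V \<times> V" using assms(1) by (simp add: oriented_graph_def)
  have "hom_to_P3plus V (push (X \<inter> V) A) \<phi>"
    unfolding hom_to_P3plus_def
  proof (intro ballI, clarify)
    fix u v assume "(u, v) \<in> push (X \<inter> V) A"
    then consider "(u, v) \<in> A" "(u \<in> X \<inter> V) = (v \<in> X \<inter> V)" | "(v, u) \<in> A" "\<not> ((u \<in> X \<inter> V) = (v \<in> X \<inter> V))"
      unfolding push_def by blast
    then show "(\<phi> u, \<phi> v) \<in> P3plus_arcs"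
    proof cases
      case 1
      then have "u \<in> V" "v \<in> V" using AV by auto
      then have "R (\<phi> u) (\<phi> v) (u \<in> X \<longleftrightarrow> v \<in> X)" using g 1 unfolding good_def by blast
      then show ?thesis using 1 \<open>u \<in> V\<close> \<open>v \<in> V\<close> by (cases "u \<in> X"; cases "v \<in> X") (auto simp: R_def T_def)
    next
      case 2
      then have "u \<in> V" "v \<in> V" using AV by auto
      then have "R (\<phi> v) (\<phi> u) (v \<in> X \<longleftrightarrow> u \<in> X)" using g 2 unfolding good_def by blast
      then show ?thesis using 2 \<open>u \<in> V\<close> \<open>v \<in> V\<close> by (cases "u \<in> X"; cases "v \<in> X") (auto simp: R_def T_def)
    qed
  qed
  then show ?thesis by blast
qed

end
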